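(* Let $n\ge1$ and let $U_1,\dots,U_n$ be i.i.d. uniform random variables on $[0,1]$. Then for every integer $0\le j\le n$, $$\mathbb P\Big(j-\tfrac12\le U_1+\dots+U_n\le j+\tfrac12\Big)=\frac{\overline{A(n,j)}}{2^nn!}.$$
   Context: $\overline{A(n,j)}$ is the number of signed permutations $\sigma\in B_n$ (bijections of $\{\pm1,\dots,\pm n\}$ with $\sigma(-i)=-\sigma(i)$) with exactly $j$ descents, where, using the order $1<2<\dots<n<-n<\dots<-1$, $\sigma$ has a descent at $i$ ($1\le i\le n-1$) if $\sigma(i)>\sigma(i+1)$ and a descent at $n$ if $\sigma(n)<0$. *)

theory Defs
  imports "HOL-Probability.Probability"
begin

definition signed_domain :: "nat \<Rightarrow> int set" where
  "signed_domain n = {-int n..int n} - {0}"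

definition signed_perms :: "nat \<Rightarrow> (int \<Rightarrow> int) set" where
  "signed_perms n = {\<sigma>. bij_betw \<sigma> (signed_domain n) (signed_domain n)
      \<and> (\<forall>i\<in>signed_domain n. \<sigma> (-i) = - \<sigma> i)
      \<and> (\<forall>x. x \<notin> signed_domain n \<longrightarrow> \<sigma> x = x)}"

text \<open>Rank in the order 1 < 2 < ... < n < -n < ... < -1.\<close>
definition signed_rank :: "nat \<Rightarrow> int \<Rightarrow> int" where
  "signed_rank n x = (if x > 0 then x else 2 * int n + 1 + x)"

definition signed_descents :: "nat \<Rightarrow> (int \<Rightarrow> int) \<Rightarrow> nat set" where
  "signed_descents n \<sigma> =
     {i \<in> {1..n}. (i < n \<and> signed_rank n (\<sigma> (int i)) > signed_rank n (\<sigma> (int i + 1)))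
                 \<or> (i = n \<and> \<sigma> (int n) < 0)}"

definition eulerB :: "nat \<Rightarrow> nat \<Rightarrow> nat" where
  "eulerB n j = card {\<sigma> \<in> signed_perms n. card (signed_descents n \<sigma>) = j}"

end

theory Submission
  imports Defs
begin


definition tp :: "bool \<Rightarrow> nat \<Rightarrow> real \<Rightarrow> real" where
  "tp s k y = (if (if s then 0 < y else 0 \<le> y) then y ^ k else 0)"

definition Fk :: "bool \<Rightarrow> nat \<Rightarrow> real \<Rightarrow> real" where
  "Fk s k x = (\<Sum>i\<le>k. (-1)^i * real (k choose i) * tp s k (x - real i)) / fact k"

lemma tp_Suc_max: "tp s (Suc k) y = (max y 0) ^ Suc k"
  by (auto simp: tp_def max_def)

lemma tp_cont: "continuous_on A (tp s (Suc k))"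
  unfolding tp_Suc_max[abs_def] by (intro continuous_intros)

lemma tp_deriv:
  assumes "y \<noteq> 0"
  shows "(tp s (Suc k) has_real_derivative (real (Suc k) * tp s k y)) (at y)"
proof (cases "y > 0")
  case True
  have d: "((\<lambda>z. z ^ Suc k) has_real_derivative (real (Suc k) * y ^ k)) (at y)"
    by (rule derivative_eq_intros refl | simp)+
  have e: "tp s k y = y ^ k" using True by (simp add: tp_def)
  show ?thesis unfolding e
    apply (rule has_field_derivative_transform_within_open[where f="\<lambda>z. z ^ Suc k" and S="{0<..}"])
    using d True by (auto simp: tp_def)
next
  case False
  with assms have y: "y < 0" by simp
  have e: "tp s k y = 0" using y by (simp add: tp_def)
  show ?thesis unfolding e
    apply (rule has_field_derivative_transform_within_open[where S="{..<0}" and f="\<lambda>_. 0"])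
    using y by (auto simp: tp_def)
qed

lemma tpc_deriv:
  assumes "c - t \<noteq> 0"
  shows "((\<lambda>t. tp s (Suc k) (c - t)) has_real_derivative - (real (Suc k) * tp s k (c - t))) (at t)"
proof -
  have "((\<lambda>t. c - t) has_real_derivative -1) (at t)"
    by (rule derivative_eq_intros refl | simp)+
  from DERIV_chain2[OF tp_deriv[OF assms] this] show ?thesis by simp
qed

lemma pascal_sum:
  fixes g :: "nat \<Rightarrow> real"
  shows "(\<Sum>i\<le>k. (-1)^i * real (k choose i) * (g i - g (Suc i)))
       = (\<Sum>i\<le>Suc k. (-1)^i * real (Suc k choose i) * g i)"
proof -
  have A: "(\<Sum>i\<le>Suc k. (-1)^i * real (Suc k choose i) * g i)
      = g 0 + (\<Sum>i\<le>k. (-1)^Suc i * real (Suc k choose Suc i) * g (Suc i))"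
    by (simp only: sum.atMost_Suc_shift) simp
  also have "\<dots> = g 0 + (\<Sum>i\<le>k. - ((-1)^i * real (k choose i) * g (Suc i))
            - (-1)^i * real (k choose Suc i) * g (Suc i))"
    by (intro arg_cong2[where f="(+)"] refl sum.cong) (simp_all add: binomial_Suc_Suc algebra_simps)
  also have "\<dots> = g 0 - (\<Sum>i\<le>k. (-1)^i * real (k choose i) * g (Suc i))
            - (\<Sum>i\<le>k. (-1)^i * real (k choose Suc i) * g (Suc i))"
    by (simp add: sum_subtractf sum_negf)
  finally have A': "(\<Sum>i\<le>Suc k. (-1)^i * real (Suc k choose i) * g i) = \<dots>" .
  have B: "(\<Sum>i\<le>k. (-1)^i * real (k choose i) * g i)
      = g 0 - (\<Sum>i\<le>k. (-1)^i * real (k choose Suc i) * g (Suc i))"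
  proof (cases k)
    case 0 then show ?thesis by simp
  next
    case (Suc m)
    have "(\<Sum>i\<le>Suc m. (-1)^i * real (Suc m choose i) * g i)
        = g 0 + (\<Sum>i\<le>m. (-1)^Suc i * real (Suc m choose Suc i) * g (Suc i))"
      by (simp only: sum.atMost_Suc_shift) simp
    also have "(\<Sum>i\<le>m. (-1)^Suc i * real (Suc m choose Suc i) * g (Suc i))
        = - (\<Sum>i\<le>Suc m. (-1)^i * real (Suc m choose Suc i) * g (Suc i))"
      by (simp add: sum_negf binomial_eq_0 del: binomial_Suc_Suc)
    finally show ?thesis unfolding Suc by (simp del: sum.atMost_Suc)
  qed
  show ?thesis
    unfolding A' by (simp add: sum_subtractf right_diff_distrib B del: sum.atMost_Suc)
qed

lemma Fk_integral:
  "((\<lambda>t. Fk s k (x - t)) has_integral Fk s (Suc k) x) {0..1}"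
proof -
  define f where "f t = - (\<Sum>i\<le>k. (-1)^i * real (k choose i) * tp s (Suc k) (x - real i - t)) / fact (Suc k)" for t
  have "((\<lambda>t. Fk s k (x - t)) has_integral (f 1 - f 0)) {0..1}"
  proof (rule fundamental_theorem_of_calculus_strong[where S="(\<lambda>i. x - real i) ` {..k}"])
    fix t assume t: "t \<in> {0..1} - (\<lambda>i. x - real i) ` {..k}"
    have "(f has_real_derivative Fk s k (x - t)) (at t)"
    proof -
      have "(f has_real_derivative
         - (\<Sum>i\<le>k. (-1)^i * real (k choose i) * (- (real (Suc k) * tp s k (x - real i - t)))) / fact (Suc k)) (at t)"
        unfolding f_def
        apply (intro DERIV_cdivide DERIV_minus DERIV_sum DERIV_cmult tpc_deriv)
        using t by auto
      moreover have "- (\<Sum>i\<le>k. (-1)^i * real (k choose i) * (- (real (Suc k) * tp s k (x - real i - t)))) / fact (Suc k)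
          = Fk s k (x - t)"
      proof -
        define S where "S = (\<Sum>i\<le>k. (-1)^i * real (k choose i) * tp s k (x - t - real i))"
        have "(\<Sum>i\<le>k. (-1)^i * real (k choose i) * (- (real (Suc k) * tp s k (x - real i - t))))
            = - real (Suc k) * S"
          unfolding S_def by (simp add: sum_distrib_left algebra_simps)
        moreover have "Fk s k (x - t) = S / fact k" unfolding S_def Fk_def by simp
        ultimately show ?thesis
          by (simp add: fact_Suc field_simps del: of_nat_Suc)
      qed
      ultimately show ?thesis by simp
    qed
    then show "(f has_vector_derivative Fk s k (x - t)) (at t)"
      by (simp add: has_real_derivative_iff_has_vector_derivative)
  next
    show "continuous_on {0..1} f" unfolding f_def
      by (intro continuous_intros continuous_on_compose2[OF tp_cont]) auto
  qed auto
  moreover have "f 1 - f 0 = Fk s (Suc k) x"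
  proof -
    have "f 1 - f 0 = (\<Sum>i\<le>k. (-1)^i * real (k choose i) * (tp s (Suc k) (x - real i) - tp s (Suc k) (x - real (Suc i)))) / fact (Suc k)"
      by (simp add: f_def sum_subtractf diff_divide_distrib algebra_simps)
    also have "\<dots> = Fk s (Suc k) x"
      unfolding Fk_def by (subst pascal_sum[where g="\<lambda>i. tp s (Suc k) (x - real i)"]) simp
    finally show ?thesis .
  qed
  ultimately show ?thesis by simp
qed


lemma sumunif:
  fixes X Y :: "'a \<Rightarrow> real"
  assumes P: "prob_space M"
    and ind: "prob_space.indep_var M borel Y borel X"
    and dY: "distr M borel Y = uniform_measure lborel {0..1::real}"
    and A[measurable]: "A \<in> sets borel"
  shows "emeasure M {\<omega>\<in>space M. X \<omega> + Y \<omega> \<in> A}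
      = (\<integral>\<^sup>+t. indicator {0..1} t * emeasure M {\<omega>\<in>space M. X \<omega> + t \<in> A} \<partial>lborel)"
proof -
  interpret prob_space M by fact
  have rvY[measurable]: "Y \<in> borel_measurable M" and rvX[measurable]: "X \<in> borel_measurable M"
    using ind by (auto simp: indep_var_distribution_eq)
  have eq: "distr M borel Y \<Otimes>\<^sub>M distr M borel X = distr M (borel \<Otimes>\<^sub>M borel) (\<lambda>x. (Y x, X x))"
    using ind by (simp add: indep_var_distribution_eq)
  interpret DX: prob_space "distr M borel X" by (rule prob_space_distr) simp
  define B where "B = {p\<in>space (borel \<Otimes>\<^sub>M borel). snd p + fst p \<in> (A::real set)}"
  have B[measurable]: "B \<in> sets (borel \<Otimes>\<^sub>M borel)" unfolding B_def by measurable
  have B2: "B \<in> sets (borel \<Otimes>\<^sub>M distr M borel X)"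
    using B by (metis sets_distr sets_pair_measure_cong)
  have Bm: "(\<lambda>t. emeasure (distr M borel X) (Pair t -` B)) \<in> borel_measurable borel"
    by (rule DX.measurable_emeasure_Pair[OF B2])
  have "emeasure M {\<omega>\<in>space M. X \<omega> + Y \<omega> \<in> A} = emeasure (distr M (borel \<Otimes>\<^sub>M borel) (\<lambda>x. (Y x, X x))) B"
    by (subst emeasure_distr[OF _ B]) (auto simp: B_def space_pair_measure intro!: arg_cong[where f="emeasure M"])
  also have "\<dots> = emeasure (distr M borel Y \<Otimes>\<^sub>M distr M borel X) B" by (simp add: eq)
  also have "\<dots> = (\<integral>\<^sup>+t. emeasure (distr M borel X) (Pair t -` B) \<partial>distr M borel Y)"
    by (rule DX.emeasure_pair_measure_alt) (simp add: B)
  also have "\<dots> = (\<integral>\<^sup>+t. emeasure (distr M borel X) (Pair t -` B) \<partial>uniform_measure lborel {0..1})"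
    by (simp add: dY)
  also have "\<dots> = (\<integral>\<^sup>+t. emeasure (distr M borel X) (Pair t -` B) * indicator {0..1} t \<partial>lborel) / emeasure lborel {0..1::real}"
    apply (rule nn_integral_uniform_measure)
    using Bm by simp_all
  also have "\<dots> = (\<integral>\<^sup>+t. indicator {0..1} t * emeasure M {\<omega>\<in>space M. X \<omega> + t \<in> A} \<partial>lborel)"
    apply (simp add: divide_ennreal_def)
    apply (rule nn_integral_cong)
    apply (subst emeasure_distr)
      apply simp
     apply (simp add: B)
    apply (auto simp: B_def space_pair_measure mult.commute intro!: arg_cong[where f="emeasure M"] arg_cong2[where f="(*)"])
    done
  finally show ?thesis .
qed


lemma irwin:
  fixes U :: "nat \<Rightarrow> 'a \<Rightarrow> real"
  assumes P: "prob_space M"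
    and ind: "prob_space.indep_vars M (\<lambda>_. borel) U {1..n}"
    and dist: "\<And>i. i \<in> {1..n} \<Longrightarrow> distr M borel (U i) = uniform_measure lborel {0..1::real}"
  shows "k \<le> n \<Longrightarrow> measure M {\<omega>\<in>space M. (if s then (\<Sum>i=1..k. U i \<omega>) < x else (\<Sum>i=1..k. U i \<omega>) \<le> x)}
          = Fk s k x"
proof (induction k arbitrary: x)
  interpret prob_space M by fact
  case 0
  show ?case
    by (cases s) (auto simp: Fk_def tp_def prob_space)
next
  interpret prob_space M by fact
  case (Suc k)
  have rv[measurable]: "U i \<in> borel_measurable M" if "i \<in> {1..n}" for i
    using ind that by (auto simp: indep_vars_def)
  have rvS[measurable]: "(\<lambda>\<omega>. \<Sum>i=1..k. U i \<omega>) \<in> borel_measurable M"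
    using Suc.prems by (intro borel_measurable_sum rv) auto
  have ind2: "indep_var borel (U (Suc k)) borel (\<lambda>\<omega>. \<Sum>i=1..k. U i \<omega>)"
  proof -
    have "indep_var (PiM {Suc k} (\<lambda>_. borel)) (\<lambda>\<omega>. restrict (\<lambda>i. U i \<omega>) {Suc k})
                    (PiM {1..k} (\<lambda>_. borel)) (\<lambda>\<omega>. restrict (\<lambda>i. U i \<omega>) {1..k})"
      by (rule indep_var_restrict[OF ind]) (use Suc.prems in auto)
    from indep_var_compose[OF this, of "\<lambda>f. f (Suc k)" borel "\<lambda>f. \<Sum>i=1..k. f i" borel]
    have "indep_var borel ((\<lambda>f. f (Suc k)) \<circ> (\<lambda>\<omega>. restrict (\<lambda>i. U i \<omega>) {Suc k}))
                    borel ((\<lambda>f. \<Sum>i=1..k. f i) \<circ> (\<lambda>\<omega>. restrict (\<lambda>i. U i \<omega>) {1..k}))"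
      by measurable
    moreover have "((\<lambda>f. f (Suc k)) \<circ> (\<lambda>\<omega>. restrict (\<lambda>i. U i \<omega>) {Suc k})) = U (Suc k)"
      by (auto simp: fun_eq_iff)
    moreover have "((\<lambda>f. \<Sum>i=1..k. f i) \<circ> (\<lambda>\<omega>. restrict (\<lambda>i. U i \<omega>) {1..k})) = (\<lambda>\<omega>. \<Sum>i=1..k. U i \<omega>)"
      by (auto simp: fun_eq_iff)
    ultimately show ?thesis by simp
  qed
  define A where "A = {a::real. if s then a < x else a \<le> x}"
  have A[measurable]: "A \<in> sets borel"
    by (cases s) (auto simp: A_def)
  have IH: "measure M {\<omega>\<in>space M. (\<Sum>i=1..k. U i \<omega>) + t \<in> A} = Fk s k (x - t)" for t
  proof -
    have "{\<omega>\<in>space M. (\<Sum>i=1..k. U i \<omega>) + t \<in> A}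
       = {\<omega>\<in>space M. (if s then (\<Sum>i=1..k. U i \<omega>) < x - t else (\<Sum>i=1..k. U i \<omega>) \<le> x - t)}"
      by (auto simp: A_def split: if_splits)
    then show ?thesis using Suc.IH[of "x - t"] Suc.prems by simp
  qed
  have nn: "0 \<le> Fk s k (x - t)" for t
    using IH[of t] by (metis measure_nonneg)
  have hi: "((\<lambda>t. Fk s k (x - t)) has_integral Fk s (Suc k) x) {0..1}"
    by (rule Fk_integral)
  have nn2: "0 \<le> Fk s (Suc k) x"
    by (rule has_integral_nonneg[OF hi]) (use nn in auto)
  have "emeasure M {\<omega>\<in>space M. (\<Sum>i=1..k. U i \<omega>) + U (Suc k) \<omega> \<in> A}
      = (\<integral>\<^sup>+t. indicator {0..1} t * emeasure M {\<omega>\<in>space M. (\<Sum>i=1..k. U i \<omega>) + t \<in> A} \<partial>lborel)"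
    by (rule sumunif[OF P _ _ A]) (use ind2 dist Suc.prems in auto)
  also have "\<dots> = (\<integral>\<^sup>+t. ennreal (indicator {0..1} t * Fk s k (x - t)) \<partial>lborel)"
    by (rule nn_integral_cong) (auto simp: emeasure_eq_measure IH[simplified] split: split_indicator)
  also have "\<dots> = ennreal (Fk s (Suc k) x)"
    by (rule nn_integral_has_integral_lebesgue[OF _ hi]) (use nn in auto)
  finally have e: "emeasure M {\<omega>\<in>space M. (\<Sum>i=1..k. U i \<omega>) + U (Suc k) \<omega> \<in> A} = ennreal (Fk s (Suc k) x)" .
  have "{\<omega>\<in>space M. (if s then (\<Sum>i=1..Suc k. U i \<omega>) < x else (\<Sum>i=1..Suc k. U i \<omega>) \<le> x)}
      = {\<omega>\<in>space M. (\<Sum>i=1..k. U i \<omega>) + U (Suc k) \<omega> \<in> A}"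
    by (auto simp: A_def)
  then show ?case using e nn2 by (simp add: emeasure_eq_measure)
qed


definition gt :: "int \<Rightarrow> int \<Rightarrow> bool" where
  "gt a b = (if a > 0 then (b > 0 \<and> a > b) else (b \<ge> 0 \<or> a > b))"

fun dc :: "int list \<Rightarrow> nat" where
  "dc (a # b # xs) = (if gt a b then 1 else 0) + dc (b # xs)"
| "dc _ = 0"

definition des :: "int list \<Rightarrow> nat" where "des w = dc (w @ [0])"

definition ins :: "nat \<Rightarrow> int \<Rightarrow> int list \<Rightarrow> int list" where
  "ins p v w = take p w @ v # drop p w"

lemma ins_0[simp]: "ins 0 v w = v # w" by (simp add: ins_def)
lemma ins_Suc_Cons[simp]: "ins (Suc p) v (x # w) = x # ins p v w" by (simp add: ins_def)

lemma dc_Cons_Cons: "dc (a # xs) = (case xs of [] \<Rightarrow> 0 | b # ys \<Rightarrow> (if gt a b then 1 else 0) + dc xs)"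
  by (cases xs) auto

lemma des_Cons: "des (x # xs) = (if gt x (hd (xs @ [0])) then 1 else 0) + des xs"
  by (cases xs) (auto simp: des_def)

definition small :: "nat \<Rightarrow> int list \<Rightarrow> bool" where
  "small N xs = (\<forall>a\<in>set xs. 0 < \<bar>a\<bar> \<and> \<bar>a\<bar> < int N)"

lemma gt_v: "\<bar>v\<bar> = int N \<Longrightarrow> 0 < \<bar>a\<bar> \<Longrightarrow> \<bar>a\<bar> < int N \<Longrightarrow> gt a v \<longleftrightarrow> a < 0"
  by (auto simp: gt_def)
lemma v_gt: "\<bar>v\<bar> = int N \<Longrightarrow> 0 < \<bar>a\<bar> \<Longrightarrow> \<bar>a\<bar> < int N \<Longrightarrow> gt v a \<longleftrightarrow> a > 0"
  by (auto simp: gt_def)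
lemma gt_0: "a \<noteq> 0 \<Longrightarrow> gt a 0 \<longleftrightarrow> a < 0"
  by (auto simp: gt_def)

definition D :: "nat \<Rightarrow> int \<Rightarrow> int list \<Rightarrow> int" where
  "D p v xs = int (des (ins p v xs)) - int (des xs)"

lemma D_0: "small N xs \<Longrightarrow> \<bar>v\<bar> = int N \<Longrightarrow> N > 0 \<Longrightarrow>
   D 0 v xs = (if xs = [] then (if v < 0 then 1 else 0) else (if hd xs > 0 then 1 else 0))"
  by (cases xs) (auto simp: D_def des_Cons small_def v_gt gt_0)

lemma D_Suc:
  assumes "small N (x # ys)" "\<bar>v\<bar> = int N" "N > 0" "q \<le> length ys"
  shows "D (Suc q) v (x # ys) = D q v ys +
     (if q = 0 then (if x < 0 then 1 else 0) - (if gt x (hd (ys @ [0])) then 1 else 0) else 0)"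
proof (cases q)
  case 0
  then show ?thesis using assms
    by (auto simp: D_def des_Cons small_def gt_v)
next
  case (Suc r)
  with assms have "ys \<noteq> []" by auto
  then obtain y zs where ys: "ys = y # zs" by (cases ys) auto
  show ?thesis using Suc ys by (simp add: D_def des_Cons)
qed

lemma D_range: "small N xs \<Longrightarrow> \<bar>v\<bar> = int N \<Longrightarrow> N > 0 \<Longrightarrow> p \<le> length xs \<Longrightarrow> D p v xs \<in> {0, 1}"
proof (induction xs arbitrary: p)
  case Nil
  then show ?case by (simp add: D_0)
next
  case (Cons x ys)
  show ?case
  proof (cases p)
    case 0
    then show ?thesis using Cons.prems by (simp add: D_0)
  next
    case (Suc q)
    have sm: "small N ys" using Cons.prems by (simp add: small_def)
    have x: "0 < \<bar>x\<bar>" "\<bar>x\<bar> < int N" using Cons.prems by (auto simp: small_def)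
    show ?thesis
    proof (cases "q = 0")
      case True
      have "D (Suc 0) v (x # ys) = D 0 v ys + ((if x < 0 then 1 else 0) - (if gt x (hd (ys @ [0])) then 1 else 0))"
        using D_Suc[OF Cons.prems(1,2,3), of 0] by simp
      then show ?thesis using True Suc D_0[OF sm Cons.prems(2,3)] x sm
        by (cases ys) (auto simp: gt_def small_def split: if_splits)
    next
      case False
      then show ?thesis using D_Suc[OF Cons.prems(1,2,3), of q] Cons.IH[OF sm Cons.prems(2,3), of q] Cons.prems Suc
        by simp
    qed
  qed
qed

lemma D_sum: "small N xs \<Longrightarrow> N > 0 \<Longrightarrow>
   (\<Sum>p\<le>length xs. D p (int N) xs + D p (- int N) xs) = 2 * int (length xs) + 1 - 2 * int (des xs)"
proof (induction xs)
  case Nil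
  then show ?case by (simp add: D_0 des_def)
next
  case (Cons x ys)
  have sm: "small N ys" using Cons.prems by (simp add: small_def)
  have x: "0 < \<bar>x\<bar>" "\<bar>x\<bar> < int N" using Cons.prems by (auto simp: small_def)
  let ?c = "(if x < 0 then 1 else 0) - (if gt x (hd (ys @ [0])) then 1 else 0) :: int"
  have "(\<Sum>p\<le>length (x # ys). D p (int N) (x # ys) + D p (- int N) (x # ys))
      = (D 0 (int N) (x # ys) + D 0 (- int N) (x # ys))
        + (\<Sum>q\<le>length ys. D (Suc q) (int N) (x # ys) + D (Suc q) (- int N) (x # ys))"
    by (simp only: length_Cons sum.atMost_Suc_shift)
  also have "(\<Sum>q\<le>length ys. D (Suc q) (int N) (x # ys) + D (Suc q) (- int N) (x # ys))
      = (\<Sum>q\<le>length ys. (D q (int N) ys + D q (- int N) ys) + (if q = 0 then 2 * ?c else 0))"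
    by (rule sum.cong) (use D_Suc[OF Cons.prems(1) _ Cons.prems(2)] in auto)
  also have "\<dots> = (\<Sum>q\<le>length ys. D q (int N) ys + D q (- int N) ys) + 2 * ?c"
    by (simp add: sum.distrib)
  also have "D 0 (int N) (x # ys) + D 0 (- int N) (x # ys) = 2 * (if x > 0 then 1 else 0)"
    using Cons.prems by (simp add: D_0)
  finally show ?case
    using Cons.IH[OF sm Cons.prems(2)] x by (auto simp: des_Cons)
qed


definition W :: "nat \<Rightarrow> int list set" where
  "W m = {w. length w = m \<and> distinct (map abs w) \<and> set (map abs w) = {1..int m}}"

definition Sl :: "nat \<Rightarrow> (nat \<times> int) set" where
  "Sl m = {..m} \<times> {1, -1}"

definition insw :: "nat \<Rightarrow> int list \<times> nat \<times> int \<Rightarrow> int list" where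
  "insw m x = ins (fst (snd x)) (snd (snd x) * int (Suc m)) (fst x)"

lemma W_small: "w \<in> W m \<Longrightarrow> small (Suc m) w"
proof -
  assume w: "w \<in> W m"
  { fix a assume "a \<in> set w"
    then have "\<bar>a\<bar> \<in> set (map abs w)" by simp
    then have "0 < \<bar>a\<bar> \<and> \<bar>a\<bar> < int (Suc m)" using w by (auto simp: W_def) }
  then show ?thesis by (simp add: small_def)
qed

lemma finite_W: "finite (W m)"
proof -
  have "W m \<subseteq> {w. set w \<subseteq> {-int m..int m} \<and> length w = m}"
  proof
    fix w assume w: "w \<in> W m"
    { fix a assume "a \<in> set w"
      then have "\<bar>a\<bar> \<in> set (map abs w)" by simp
      then have "\<bar>a\<bar> \<le> int m" using w by (auto simp: W_def)
      then have "a \<in> {-int m..int m}" by auto }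
    then show "w \<in> {w. set w \<subseteq> {-int m..int m} \<and> length w = m}" using w by (simp add: W_def subset_iff)
  qed
  moreover have "finite {w. set w \<subseteq> {-int m..int m} \<and> length w = m}"
    by (rule finite_lists_length_eq) simp
  ultimately show ?thesis by (rule finite_subset)
qed

lemma finite_Sl: "finite (Sl m)" by (simp add: Sl_def)
lemma card_Sl: "card (Sl m) = 2 * Suc m" by (simp add: Sl_def card_cartesian_product)

lemma length_ins[simp]: "p \<le> length w \<Longrightarrow> length (ins p v w) = Suc (length w)"
  by (simp add: ins_def)

lemma map_ins: "map f (ins p v w) = ins p (f v) (map f w)"
  by (simp add: ins_def take_map drop_map)

lemma set_ins: "p \<le> length w \<Longrightarrow> set (ins p v w) = insert v (set w)"
proof -
  assume "p \<le> length w"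
  have "set w = set (take p w @ drop p w)" by simp
  then show ?thesis by (auto simp: ins_def simp del: append_take_drop_id)
qed

lemma distinct_mid: "distinct (xs @ v # ys) = distinct (v # xs @ ys)"
  by auto

lemma distinct_ins: "distinct (ins p v w) \<longleftrightarrow> distinct w \<and> v \<notin> set w"
  unfolding ins_def distinct_mid by (simp only: append_take_drop_id distinct.simps conj_commute)

lemma nth_ins_p: "p \<le> length w \<Longrightarrow> ins p v w ! p = v"
  by (simp add: ins_def nth_append)

lemma take_ins: "p \<le> length w \<Longrightarrow> take p (ins p v w) = take p w"
  by (simp add: ins_def)
lemma drop_ins: "p \<le> length w \<Longrightarrow> drop (Suc p) (ins p v w) = drop p w"
  by (simp add: ins_def)

lemma insw_in: "x \<in> W m \<times> Sl m \<Longrightarrow> insw m x \<in> W (Suc m)"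
proof -
  assume x: "x \<in> W m \<times> Sl m"
  obtain w p s where xe: "x = (w, p, s)" by (cases x) auto
  have w: "w \<in> W m" and p: "p \<le> m" and s: "s = 1 \<or> s = -1" using x by (auto simp: xe Sl_def)
  have lw: "length w = m" using w by (simp add: W_def)
  have ab: "\<bar>s * int (Suc m)\<bar> = int (Suc m)" using s by auto
  have "int (Suc m) \<notin> set (map abs w)" using w by (auto simp: W_def)
  then show ?thesis using w p lw ab
    by (auto simp: insw_def xe W_def map_ins distinct_ins set_ins)
qed

lemma insw_inj: "inj_on (insw m) (W m \<times> Sl m)"
proof (rule inj_onI)
  fix x y assume x: "x \<in> W m \<times> Sl m" and y: "y \<in> W m \<times> Sl m" and eq: "insw m x = insw m y"
  obtain w p s where xe: "x = (w, p, s)" by (cases x) auto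
  obtain w' p' s' where ye: "y = (w', p', s')" by (cases y) auto
  have w: "w \<in> W m" and p: "p \<le> m" and s: "s = 1 \<or> s = -1" using x by (auto simp: xe Sl_def)
  have w': "w' \<in> W m" and p': "p' \<le> m" and s': "s' = 1 \<or> s' = -1" using y by (auto simp: ye Sl_def)
  have lw: "length w = m" "length w' = m" using w w' by (auto simp: W_def)
  define u where "u = insw m x"
  have u1: "u = ins p (s * int (Suc m)) w" by (simp add: u_def insw_def xe)
  have u2: "u = ins p' (s' * int (Suc m)) w'" unfolding u_def eq by (simp add: insw_def ye)
  have uW: "u \<in> W (Suc m)" unfolding u_def by (rule insw_in[OF x])
  have up: "u ! p = s * int (Suc m)" using p lw by (simp add: u1 nth_ins_p)
  have big: "\<bar>u ! i\<bar> = int (Suc m) \<longleftrightarrow> i = p" if "i \<le> m" for i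
  proof
    assume h: "\<bar>u ! i\<bar> = int (Suc m)"
    have du: "distinct (map abs u)" and lu: "length u = Suc m" using uW by (auto simp: W_def)
    have "map abs u ! i = map abs u ! p" using h up s that p lu by auto
    moreover have "i < length (map abs u)" "p < length (map abs u)" using lu that p by auto
    ultimately show "i = p" using du nth_eq_iff_index_eq by blast
  next
    assume "i = p" then show "\<bar>u ! i\<bar> = int (Suc m)" using up s by auto
  qed
  have big': "\<bar>u ! p'\<bar> = int (Suc m)" using p' lw s' by (auto simp: u2 nth_ins_p)
  have pp: "p' = p" using big[OF p'] big' by simp
  have ss: "s' = s" using nth_ins_p[of p w "s * int (Suc m)"] nth_ins_p[of p' w' "s' * int (Suc m)"] lw p pp u1 u2
    by simp
  have "w = take p w @ drop p w" by simp
  also have "\<dots> = take p u @ drop (Suc p) u" using p lw by (simp add: u1 take_ins drop_ins)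
  also have "\<dots> = w'" using p lw pp by (simp add: u2 take_ins drop_ins)
  finally show "x = y" using xe ye pp ss by simp
qed

lemma insw_surj: "insw m ` (W m \<times> Sl m) = W (Suc m)"
proof
  show "insw m ` (W m \<times> Sl m) \<subseteq> W (Suc m)" using insw_in by auto
next
  show "W (Suc m) \<subseteq> insw m ` (W m \<times> Sl m)"
  proof
    fix u assume u: "u \<in> W (Suc m)"
    have lu: "length u = Suc m" using u by (simp add: W_def)
    have "int (Suc m) \<in> set (map abs u)" using u by (simp add: W_def)
    then obtain p where p: "p < Suc m" and up: "\<bar>u ! p\<bar> = int (Suc m)"
      using lu by (auto simp: in_set_conv_nth)
    define s where "s = sgn (u ! p)"
    define w where "w = take p u @ drop (Suc p) u"
    have s: "s = 1 \<or> s = -1" and us: "u ! p = s * int (Suc m)"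
      using up by (auto simp: s_def sgn_if abs_if split: if_splits)
    have lw: "length w = m" using lu p by (simp add: w_def)
    have uins: "u = ins p (u ! p) w"
      using p lu by (simp add: w_def ins_def id_take_nth_drop[symmetric])
    have d: "distinct (map abs u)" "set (map abs u) = {1..int (Suc m)}" using u by (auto simp: W_def)
    have "distinct (ins p \<bar>u ! p\<bar> (map abs w))" using d uins p lw
      by (metis map_ins)
    then have dw: "distinct (map abs w)" and nin: "int (Suc m) \<notin> set (map abs w)"
      using p lw up by (auto simp: distinct_ins)
    have "set (ins p \<bar>u ! p\<bar> (map abs w)) = {1..int (Suc m)}" using d uins p lw
      by (metis map_ins)
    then have "insert (int (Suc m)) (set (map abs w)) = {1..int (Suc m)}"
      using p lw up by (simp add: set_ins)
    then have "set (map abs w) = {1..int (Suc m)} - {int (Suc m)}"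
      using Diff_insert_absorb[OF nin] by simp
    also have "\<dots> = {1..int m}" by auto
    finally have "w \<in> W m" using lw dw by (simp add: W_def)
    moreover have "(p, s) \<in> Sl m" using p s by (auto simp: Sl_def)
    moreover have "u = ins p (s * int (Suc m)) w" using uins us by simp
    ultimately show "u \<in> insw m ` (W m \<times> Sl m)"
      by (intro image_eqI[where x="(w, p, s)"]) (auto simp: insw_def)
  qed
qed




definition A :: "nat \<Rightarrow> nat \<Rightarrow> nat" where
  "A m j = card {w \<in> W m. des w = j}"

lemma card_D1:
  assumes w: "w \<in> W m"
  shows "int (card {sl \<in> Sl m. D (fst sl) (snd sl * int (Suc m)) w = 1}) = 2 * int m + 1 - 2 * int (des w)"
proof -
  have sm: "small (Suc m) w" by (rule W_small[OF w])
  have lw: "length w = m" using w by (simp add: W_def)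
  have r: "D (fst sl) (snd sl * int (Suc m)) w \<in> {0, 1}" if "sl \<in> Sl m" for sl
    using that lw by (intro D_range[OF sm]) (auto simp: Sl_def abs_mult)
  have "int (card {sl \<in> Sl m. D (fst sl) (snd sl * int (Suc m)) w = 1})
      = (\<Sum>sl\<in>Sl m. D (fst sl) (snd sl * int (Suc m)) w)"
  proof -
    have "(\<Sum>sl\<in>Sl m. D (fst sl) (snd sl * int (Suc m)) w)
        = (\<Sum>sl\<in>Sl m. if D (fst sl) (snd sl * int (Suc m)) w = 1 then 1 else 0)"
      by (rule sum.cong) (use r in auto)
    also have "\<dots> = int (card {sl \<in> Sl m. D (fst sl) (snd sl * int (Suc m)) w = 1})"
      by (simp add: sum.If_cases finite_Sl Int_def)
    finally show ?thesis by simp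
  qed
  also have "\<dots> = (\<Sum>p\<le>m. D p (int (Suc m)) w + D p (- int (Suc m)) w)"
  proof -
    have "(\<Sum>sl\<in>Sl m. D (fst sl) (snd sl * int (Suc m)) w) = (\<Sum>p\<le>m. \<Sum>s\<in>{1, -1::int}. D p (s * int (Suc m)) w)"
      unfolding Sl_def sum.cartesian_product by (simp add: split_beta)
    also have "\<dots> = (\<Sum>p\<le>m. D p (int (Suc m)) w + D p (- int (Suc m)) w)"
      by (rule sum.cong) simp_all
    finally show ?thesis .
  qed
  also have "\<dots> = 2 * int m + 1 - 2 * int (des w)"
    using D_sum[OF sm] lw by simp
  finally show ?thesis .
qed

lemma card_D0:
  assumes w: "w \<in> W m"
  shows "int (card {sl \<in> Sl m. D (fst sl) (snd sl * int (Suc m)) w = 0}) = 2 * int (des w) + 1"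
proof -
  have sm: "small (Suc m) w" by (rule W_small[OF w])
  have lw: "length w = m" using w by (simp add: W_def)
  have r: "D (fst sl) (snd sl * int (Suc m)) w \<in> {0, 1}" if "sl \<in> Sl m" for sl
    using that lw by (intro D_range[OF sm]) (auto simp: Sl_def abs_mult)
  have "Sl m = {sl \<in> Sl m. D (fst sl) (snd sl * int (Suc m)) w = 0} \<union> {sl \<in> Sl m. D (fst sl) (snd sl * int (Suc m)) w = 1}"
    using r by auto
  then have "card (Sl m) = card {sl \<in> Sl m. D (fst sl) (snd sl * int (Suc m)) w = 0} + card {sl \<in> Sl m. D (fst sl) (snd sl * int (Suc m)) w = 1}"
  proof -
    have "card (Sl m) = card ({sl \<in> Sl m. D (fst sl) (snd sl * int (Suc m)) w = 0} \<union> {sl \<in> Sl m. D (fst sl) (snd sl * int (Suc m)) w = 1})"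
      using \<open>Sl m = _\<close> by simp
    also have "\<dots> = card {sl \<in> Sl m. D (fst sl) (snd sl * int (Suc m)) w = 0} + card {sl \<in> Sl m. D (fst sl) (snd sl * int (Suc m)) w = 1}"
      by (rule card_Un_disjoint) (auto simp: finite_Sl)
    finally show ?thesis .
  qed
  then show ?thesis using card_D1[OF w] card_Sl[of m] by simp
qed

lemma A_rec:
  "real (A (Suc m) j) = (2 * real j + 1) * real (A m j)
     + (if j = 0 then 0 else (2 * real m + 3 - 2 * real j) * real (A m (j - 1)))"
proof -
  let ?f = "insw m"
  have "{u \<in> W (Suc m). des u = j} = ?f ` {x \<in> W m \<times> Sl m. des (?f x) = j}"
  proof -
    have "{u \<in> W (Suc m). des u = j} = {u \<in> ?f ` (W m \<times> Sl m). des u = j}"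
      by (simp add: insw_surj)
    also have "\<dots> = ?f ` {x \<in> W m \<times> Sl m. des (?f x) = j}" by auto
    finally show ?thesis .
  qed
  then have "A (Suc m) j = card {x \<in> W m \<times> Sl m. des (?f x) = j}"
  proof -
    have inj: "inj_on ?f {x \<in> W m \<times> Sl m. des (?f x) = j}"
      by (rule inj_on_subset[OF insw_inj]) auto
    show ?thesis unfolding A_def \<open>{u \<in> W (Suc m). des u = j} = _\<close> by (rule card_image[OF inj])
  qed
  also have "{x \<in> W m \<times> Sl m. des (?f x) = j} = Sigma (W m) (\<lambda>w. {sl \<in> Sl m. des (?f (w, sl)) = j})"
    by auto
  also have "card \<dots> = (\<Sum>w\<in>W m. card {sl \<in> Sl m. des (?f (w, sl)) = j})"
    by (rule card_SigmaI) (auto simp: finite_W finite_Sl)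
  finally have e1: "A (Suc m) j = (\<Sum>w\<in>W m. card {sl \<in> Sl m. des (?f (w, sl)) = j})" .
  have e2: "int (card {sl \<in> Sl m. des (?f (w, sl)) = j})
      = (if des w = j then 2 * int j + 1 else 0)
        + (if des w + 1 = j then 2 * int m + 3 - 2 * int j else 0)" if w: "w \<in> W m" for w
  proof -
    have sm: "small (Suc m) w" by (rule W_small[OF w])
    have lw: "length w = m" using w by (simp add: W_def)
    have r: "D (fst sl) (snd sl * int (Suc m)) w \<in> {0, 1}" if "sl \<in> Sl m" for sl
      using that lw by (intro D_range[OF sm]) (auto simp: Sl_def abs_mult)
    have dd: "int (des (?f (w, sl))) = int (des w) + D (fst sl) (snd sl * int (Suc m)) w" for sl
      by (simp add: insw_def D_def)
    have key: "des (?f (w, sl)) = j \<longleftrightarrow> (if des w = j then D (fst sl) (snd sl * int (Suc m)) w = 0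
         else if des w + 1 = j then D (fst sl) (snd sl * int (Suc m)) w = 1 else False)" if sl: "sl \<in> Sl m" for sl
    proof -
      define d where "d = D (fst sl) (snd sl * int (Suc m)) w"
      have d01: "d = 0 \<or> d = 1" using r[OF sl] by (auto simp: d_def)
      have e: "int (des (?f (w, sl))) = int (des w) + d" using dd[of sl] by (simp add: d_def)
      show ?thesis unfolding d_def[symmetric] using d01 e by auto
    qed
    have set_eq: "{sl \<in> Sl m. des (?f (w, sl)) = j} =
        (if des w = j then {sl \<in> Sl m. D (fst sl) (snd sl * int (Suc m)) w = 0}
         else if des w + 1 = j then {sl \<in> Sl m. D (fst sl) (snd sl * int (Suc m)) w = 1} else {})"
    proof (cases "des w = j")
      case True
      then show ?thesis using key by auto
    next
      case False
      then show ?thesis using key by (cases "des w + 1 = j") auto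
    qed
    show ?thesis
      using card_D0[OF w] card_D1[OF w] by (simp add: set_eq)
  qed
  have "real (A (Suc m) j) = (\<Sum>w\<in>W m. real (card {sl \<in> Sl m. des (?f (w, sl)) = j}))"
    by (simp add: e1)
  also have "\<dots> = (\<Sum>w\<in>W m. (if des w = j then 2 * real j + 1 else 0)
        + (if des w + 1 = j then 2 * real m + 3 - 2 * real j else 0))"
  proof (rule sum.cong[OF refl])
    fix w assume "w \<in> W m"
    from arg_cong[OF e2[OF this], of real_of_int] show "real (card {sl \<in> Sl m. des (?f (w, sl)) = j}) = (if des w = j then 2 * real j + 1 else 0)
        + (if des w + 1 = j then 2 * real m + 3 - 2 * real j else 0)"
      by (simp split: if_splits)
  qed
  also have "\<dots> = (2 * real j + 1) * real (A m j)
     + (if j = 0 then 0 else (2 * real m + 3 - 2 * real j) * real (A m (j - 1)))"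
  proof -
    have s1: "(\<Sum>w\<in>W m. if des w = j then 2 * real j + 1 else 0) = (2 * real j + 1) * real (A m j)"
      by (simp add: sum.inter_filter[symmetric] finite_W A_def)
    have s2: "(\<Sum>w\<in>W m. if des w + 1 = j then 2 * real m + 3 - 2 * real j else 0)
       = (if j = 0 then 0 else (2 * real m + 3 - 2 * real j) * real (A m (j - 1)))"
    proof (cases j)
      case 0 then show ?thesis by simp
    next
      case (Suc i)
      then show ?thesis
        by (simp add: sum.inter_filter[symmetric] finite_W A_def)
    qed
    show ?thesis unfolding sum.distrib s1 s2 ..
  qed
  finally show ?thesis .
qed

lemma A_0: "A 0 j = (if j = 0 then 1 else 0)"
proof -
  have "W 0 = {[]}" by (auto simp: W_def)
  have d0: "des [] = 0" by (simp add: des_def)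
  have "{w \<in> W 0. des w = j} = {w \<in> {[]}. des w = j}" using \<open>W 0 = {[]}\<close> by simp
  also have "\<dots> = (if j = 0 then {[]} else {})" using d0 by auto
  finally have "{w \<in> W 0. des w = j} = (if j = 0 then {[]} else {})" .
  then show ?thesis by (simp add: A_def)
qed




definition Lf :: "nat \<Rightarrow> (int \<Rightarrow> int) \<Rightarrow> int list" where
  "Lf n \<sigma> = map (\<lambda>i. \<sigma> (int i)) [1..<Suc n]"

lemma dom_iff: "x \<in> signed_domain n \<longleftrightarrow> x \<noteq> 0 \<and> \<bar>x\<bar> \<le> int n"
  by (auto simp: signed_domain_def)

lemma sp_val:
  assumes "\<sigma> \<in> signed_perms n" "x \<in> signed_domain n"
  shows "\<sigma> x \<in> signed_domain n"
  using assms by (auto simp: signed_perms_def bij_betw_def)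

lemma sp_inj:
  assumes "\<sigma> \<in> signed_perms n" "x \<in> signed_domain n" "y \<in> signed_domain n" "\<sigma> x = \<sigma> y"
  shows "x = y"
  using assms by (auto simp: signed_perms_def bij_betw_def inj_on_def)

lemma sp_odd:
  assumes "\<sigma> \<in> signed_perms n" "x \<in> signed_domain n"
  shows "\<sigma> (-x) = - \<sigma> x"
  using assms by (auto simp: signed_perms_def)

lemma Lf_nth: "i < n \<Longrightarrow> Lf n \<sigma> ! i = \<sigma> (int (Suc i))"
  by (simp add: Lf_def nth_map_upt del: upt_Suc)

lemma length_Lf[simp]: "length (Lf n \<sigma>) = n" by (simp add: Lf_def)

lemma Lf_in:
  assumes s: "\<sigma> \<in> signed_perms n"
  shows "Lf n \<sigma> \<in> W n"
proof -
  have dom: "int i \<in> signed_domain n" if "i \<in> {1..n}" for i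
    using that by (auto simp: dom_iff)
  have inj: "inj_on (\<lambda>i. \<bar>\<sigma> (int i)\<bar>) {1..<Suc n}"
  proof (rule inj_onI)
    fix a b assume a: "a \<in> {1..<Suc n}" and b: "b \<in> {1..<Suc n}" and e: "\<bar>\<sigma> (int a)\<bar> = \<bar>\<sigma> (int b)\<bar>"
    have da: "int a \<in> signed_domain n" and db: "int b \<in> signed_domain n" using a b dom by auto
    have dnb: "- int b \<in> signed_domain n" using db by (auto simp: dom_iff)
    from e have "\<sigma> (int a) = \<sigma> (int b) \<or> \<sigma> (int a) = - \<sigma> (int b)" by (auto simp: abs_eq_iff)
    then show "a = b"
    proof
      assume "\<sigma> (int a) = \<sigma> (int b)"
      from sp_inj[OF s da db this] show ?thesis by simp
    next
      assume "\<sigma> (int a) = - \<sigma> (int b)"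
      then have "\<sigma> (int a) = \<sigma> (- int b)" using sp_odd[OF s db] by simp
      from sp_inj[OF s da dnb this] have "int a = - int b" .
      then show ?thesis using a b by simp
    qed
  qed
  have ml: "map abs (Lf n \<sigma>) = map (\<lambda>i. \<bar>\<sigma> (int i)\<bar>) [1..<Suc n]" by (simp add: Lf_def)
  have dist: "distinct (map abs (Lf n \<sigma>))" unfolding ml distinct_map using inj by (simp del: upt_Suc)
  have sub: "set (map abs (Lf n \<sigma>)) \<subseteq> {1..int n}"
  proof
    fix y assume "y \<in> set (map abs (Lf n \<sigma>))"
    then obtain i where i: "i \<in> {1..<Suc n}" and y: "y = \<bar>\<sigma> (int i)\<bar>" unfolding ml set_map set_upt by auto
    have "\<sigma> (int i) \<in> signed_domain n" using sp_val[OF s dom] i by auto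
    then show "y \<in> {1..int n}" using y by (auto simp: dom_iff)
  qed
  have "card (set (map abs (Lf n \<sigma>))) = n" using dist distinct_card by fastforce
  then have "set (map abs (Lf n \<sigma>)) = {1..int n}"
    using sub by (intro card_subset_eq) auto
  then show ?thesis using dist by (simp add: W_def)
qed

lemma Lf_inj: "inj_on (Lf n) (signed_perms n)"
proof (rule inj_onI)
  fix \<sigma> \<tau> assume s: "\<sigma> \<in> signed_perms n" and t: "\<tau> \<in> signed_perms n" and e: "Lf n \<sigma> = Lf n \<tau>"
  have pos: "\<sigma> x = \<tau> x" if "0 < x" "x \<le> int n" for x
  proof -
    define i where "i = nat x - 1"
    have i: "x = int (Suc i)" "i < n" using that by (auto simp: i_def)
    show ?thesis using arg_cong[OF e, of "\<lambda>l. l ! i"] i by (simp add: Lf_nth)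
  qed
  show "\<sigma> = \<tau>"
  proof
    fix x
    show "\<sigma> x = \<tau> x"
    proof (cases "x \<in> signed_domain n")
      case True
      show ?thesis
      proof (cases "x > 0")
        case True
        then show ?thesis using pos \<open>x \<in> signed_domain n\<close> by (auto simp: dom_iff)
      next
        case False
        then have mx: "- x \<in> signed_domain n" "0 < - x" "- x \<le> int n" using \<open>x \<in> signed_domain n\<close> by (auto simp: dom_iff)
        have "\<sigma> x = - \<sigma> (- x)" using sp_odd[OF s mx(1)] by simp
        also have "\<dots> = - \<tau> (- x)" using pos[OF mx(2,3)] by simp
        also have "\<dots> = \<tau> x" using sp_odd[OF t mx(1)] by simp
        finally show ?thesis .
      qed
    next
      case False
      then show ?thesis using s t by (simp add: signed_perms_def)
    qed
  qed
qed

lemma Lf_surj: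
  assumes w: "w \<in> W n"
  shows "w \<in> Lf n ` signed_perms n"
proof -
  define \<sigma> where "\<sigma> x = (if x \<in> signed_domain n then sgn x * w ! nat (\<bar>x\<bar> - 1) else x)" for x
  have lw: "length w = n" and dw: "distinct (map abs w)" and sw: "set (map abs w) = {1..int n}"
    using w by (auto simp: W_def)
  have wv: "w ! k \<noteq> 0 \<and> \<bar>w ! k\<bar> \<le> int n" if "k < n" for k
  proof -
    have "\<bar>w ! k\<bar> \<in> set (map abs w)" using that lw by (metis length_map nth_map nth_mem)
    then show ?thesis using sw by auto
  qed
  have idx: "nat (\<bar>x\<bar> - 1) < n" if "x \<in> signed_domain n" for x
    using that by (auto simp: dom_iff)
  have maps: "\<sigma> x \<in> signed_domain n" if "x \<in> signed_domain n" for x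
  proof -
    have x0: "x \<noteq> 0" using that by (simp add: dom_iff)
    have "\<sigma> x = sgn x * w ! nat (\<bar>x\<bar> - 1)" using that by (simp add: \<sigma>_def)
    then have "\<bar>\<sigma> x\<bar> = \<bar>w ! nat (\<bar>x\<bar> - 1)\<bar>" using x0 by (simp add: abs_mult)
    then show ?thesis using wv[OF idx[OF that]] unfolding dom_iff by (metis abs_0_eq)
  qed
  have inj: "inj_on \<sigma> (signed_domain n)"
  proof (rule inj_onI)
    fix a b assume a: "a \<in> signed_domain n" and b: "b \<in> signed_domain n" and e: "\<sigma> a = \<sigma> b"
    have ea: "\<sigma> a = sgn a * w ! nat (\<bar>a\<bar> - 1)" and eb: "\<sigma> b = sgn b * w ! nat (\<bar>b\<bar> - 1)"
      using a b by (auto simp: \<sigma>_def)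
    have na: "a \<noteq> 0" and nb: "b \<noteq> 0" using a b by (auto simp: dom_iff)
    have "\<bar>w ! nat (\<bar>a\<bar> - 1)\<bar> = \<bar>w ! nat (\<bar>b\<bar> - 1)\<bar>"
    proof -
      have "sgn a * w ! nat (\<bar>a\<bar> - 1) = sgn b * w ! nat (\<bar>b\<bar> - 1)" using e ea eb by simp
      from arg_cong[OF this, of abs] show ?thesis using na nb by (simp add: abs_mult)
    qed
    then have "map abs w ! nat (\<bar>a\<bar> - 1) = map abs w ! nat (\<bar>b\<bar> - 1)"
      using idx[OF a] idx[OF b] lw by simp
    then have "nat (\<bar>a\<bar> - 1) = nat (\<bar>b\<bar> - 1)"
      using dw idx[OF a] idx[OF b] lw nth_eq_iff_index_eq by (metis length_map)
    then have ab: "\<bar>a\<bar> = \<bar>b\<bar>" using na nb by simp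
    have X: "w ! nat (\<bar>a\<bar> - 1) \<noteq> 0" using wv[OF idx[OF a]] by simp
    have "sgn a * w ! nat (\<bar>a\<bar> - 1) = sgn b * w ! nat (\<bar>a\<bar> - 1)" using e ea eb ab by simp
    then have "sgn a = sgn b" using X by simp
    then show "a = b" using ab by (metis sgn_mult_abs)
  qed
  have bij: "bij_betw \<sigma> (signed_domain n) (signed_domain n)"
  proof -
    have fin: "finite (signed_domain n)" by (simp add: signed_domain_def)
    have "\<sigma> ` signed_domain n = signed_domain n"
      by (rule endo_inj_surj[OF fin _ inj]) (use maps in auto)
    then show ?thesis using inj by (simp add: bij_betw_def)
  qed
  have odd: "\<sigma> (-i) = - \<sigma> i" if "i \<in> signed_domain n" for i
    using that by (auto simp: \<sigma>_def dom_iff)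
  have out: "\<sigma> x = x" if "x \<notin> signed_domain n" for x using that by (simp add: \<sigma>_def)
  have sp: "\<sigma> \<in> signed_perms n"
    unfolding signed_perms_def using bij odd out by blast
  have "Lf n \<sigma> = w"
  proof (rule nth_equalityI)
    show "length (Lf n \<sigma>) = length w" by (simp add: lw)
  next
    fix i assume "i < length (Lf n \<sigma>)"
    then have i: "i < n" by simp
    have d: "int (Suc i) \<in> signed_domain n" using i by (simp add: dom_iff)
    show "Lf n \<sigma> ! i = w ! i" using i d by (simp add: Lf_nth \<sigma>_def)
  qed
  then show ?thesis using sp by blast
qed

lemma Lf_bij: "bij_betw (Lf n) (signed_perms n) (W n)"
  unfolding bij_betw_def using Lf_inj Lf_in Lf_surj by blast

lemma dc_sum: "dc xs = (\<Sum>i<length xs - 1. if gt (xs ! i) (xs ! Suc i) then 1 else 0)"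
proof (induction xs rule: dc.induct)
  case (1 a b xs)
  show ?case
    by (simp only: dc.simps 1 length_Cons diff_Suc_1 sum.lessThan_Suc_shift) simp
qed auto

lemma rank_gt:
  assumes "a \<in> signed_domain n" "b \<in> signed_domain n"
  shows "signed_rank n a > signed_rank n b \<longleftrightarrow> gt a b"
  using assms by (auto simp: signed_rank_def gt_def dom_iff)

lemma des_Lf:
  assumes s: "\<sigma> \<in> signed_perms n"
  shows "card (signed_descents n \<sigma>) = des (Lf n \<sigma>)"
proof -
  define ws where "ws = Lf n \<sigma> @ [0]"
  have dom: "\<sigma> (int k) \<in> signed_domain n" if "1 \<le> k" "k \<le> n" for k
    using that by (intro sp_val[OF s]) (auto simp: dom_iff)
  have w1: "ws ! i = \<sigma> (int (Suc i))" if "i < n" for i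
    using that by (simp add: ws_def nth_append Lf_nth)
  have w2: "ws ! n = 0" by (simp add: ws_def nth_append)
  define P where "P i = gt (ws ! i) (ws ! Suc i)" for i
  have "signed_descents n \<sigma> = Suc ` {i \<in> {..<n}. P i}"
  proof (rule set_eqI)
    fix k
    show "k \<in> signed_descents n \<sigma> \<longleftrightarrow> k \<in> Suc ` {i \<in> {..<n}. P i}"
    proof (cases "1 \<le> k \<and> k \<le> n")
      case True
      then obtain i where k: "k = Suc i" and i: "i < n" by (cases k) auto
      have "k \<in> signed_descents n \<sigma> \<longleftrightarrow> P i"
      proof (cases "Suc i < n")
        case True
        have "P i \<longleftrightarrow> gt (\<sigma> (int (Suc i))) (\<sigma> (int (Suc i) + 1))"
          using True i by (simp add: P_def w1 add.commute)
        also have "\<dots> \<longleftrightarrow> signed_rank n (\<sigma> (int (Suc i))) > signed_rank n (\<sigma> (int (Suc i) + 1))"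
          using dom[of "Suc i"] dom[of "Suc (Suc i)"] True by (intro rank_gt[symmetric]) (auto simp: add.commute)
        finally show ?thesis using True k by (auto simp: signed_descents_def)
      next
        case False
        then have n: "n = Suc i" using i by simp
        have "P i \<longleftrightarrow> gt (\<sigma> (int n)) 0" using n w1[of i] w2 by (simp add: P_def)
        also have "\<dots> \<longleftrightarrow> \<sigma> (int n) < 0"
          using dom[of n] n by (intro gt_0) (auto simp: dom_iff)
        finally show ?thesis using n k by (auto simp: signed_descents_def)
      qed
      then show ?thesis using k i by auto
    next
      case False
      then show ?thesis by (auto simp: signed_descents_def)
    qed
  qed
  then have "card (signed_descents n \<sigma>) = card {i \<in> {..<n}. P i}"
    by (simp add: card_image)
  also have "\<dots> = (\<Sum>i<n. if P i then 1 else 0)"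
    by (simp add: sum.inter_filter[symmetric])
  also have "\<dots> = des (Lf n \<sigma>)"
    by (simp add: des_def dc_sum ws_def[symmetric] P_def) (simp add: ws_def)
  finally show ?thesis .
qed

lemma eulerB_A: "eulerB n j = A n j"
proof -
  have e1: "{\<sigma> \<in> signed_perms n. card (signed_descents n \<sigma>) = j} = {\<sigma> \<in> signed_perms n. des (Lf n \<sigma>) = j}"
    using des_Lf by auto
  have e2: "card {\<sigma> \<in> signed_perms n. des (Lf n \<sigma>) = j} = card (Lf n ` {\<sigma> \<in> signed_perms n. des (Lf n \<sigma>) = j})"
    by (rule card_image[symmetric]) (rule inj_on_subset[OF Lf_inj], auto)
  have e3: "Lf n ` {\<sigma> \<in> signed_perms n. des (Lf n \<sigma>) = j} = {w \<in> W n. des w = j}"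
    using Lf_bij[of n] by (auto simp: bij_betw_def)
  show ?thesis unfolding eulerB_def A_def e1 e2 e3 ..
qed


definition E :: "nat \<Rightarrow> real \<Rightarrow> real" where
  "E k x = (\<Sum>i\<le>Suc k. (-1)^i * real (Suc k choose i) * tp True k (x - real i))"

lemma tp_Suc_mult: "tp True (Suc m) y = y * tp True m y"
  by (simp add: tp_def)

lemma binom_term:
  "- real (Suc (Suc m) choose Suc i) * (x - real (Suc i))
   = - x * real (Suc m choose Suc i) + (real m + 2 - x) * real (Suc m choose i)"
proof -
  have p: "real (Suc (Suc m) choose Suc i) = real (Suc m choose i) + real (Suc m choose Suc i)"
    by (simp add: binomial_Suc_Suc)
  have q: "real (Suc i) * real (Suc (Suc m) choose Suc i) = real (Suc (Suc m)) * real (Suc m choose i)"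
    using arg_cong[OF Suc_times_binomial[of i "Suc m"], of real] by (simp only: of_nat_mult)
  have "- real (Suc (Suc m) choose Suc i) * (x - real (Suc i))
      = - x * real (Suc (Suc m) choose Suc i) + real (Suc i) * real (Suc (Suc m) choose Suc i)"
    by (simp add: algebra_simps)
  also have "\<dots> = - x * (real (Suc m choose i) + real (Suc m choose Suc i)) + real (Suc (Suc m)) * real (Suc m choose i)"
    by (subst q) (simp only: p)
  finally show ?thesis by (simp add: algebra_simps)
qed

lemma E_rec: "E (Suc m) x = x * E m x + (real m + 2 - x) * E m (x - 1)"
proof -
  define h where "h i = tp True m (x - real i)" for i
  define t where "t i = (-1)^Suc i * real (Suc (Suc m) choose Suc i) * (x - real (Suc i)) * h (Suc i)" for i
  define u where "u i = (-1)^Suc i * real (Suc m choose Suc i) * h (Suc i)" for i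
  define v where "v i = (-1)^i * real (Suc m choose i) * h (Suc i)" for i
  have L: "E (Suc m) x = x * h 0 + (\<Sum>i\<le>Suc m. t i)"
  proof -
    have "E (Suc m) x = (\<Sum>i\<le>Suc (Suc m). (-1)^i * real (Suc (Suc m) choose i) * ((x - real i) * h i))"
      unfolding E_def h_def by (simp only: tp_Suc_mult)
    also have "\<dots> = x * h 0 + (\<Sum>i\<le>Suc m. t i)"
      by (simp only: sum.atMost_Suc_shift) (simp add: t_def mult.assoc)
    finally show ?thesis .
  qed
  have R1: "E m x = h 0 + (\<Sum>i\<le>Suc m. u i)"
  proof -
    have "E m x = (\<Sum>i\<le>Suc m. (-1)^i * real (Suc m choose i) * h i)"
      unfolding E_def h_def ..
    also have "\<dots> = h 0 + (\<Sum>i\<le>m. u i)"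
      by (simp only: sum.atMost_Suc_shift) (simp add: u_def)
    also have "(\<Sum>i\<le>m. u i) = (\<Sum>i\<le>Suc m. u i)"
      by (simp add: u_def binomial_eq_0 del: binomial_Suc_Suc)
    finally show ?thesis .
  qed
  have R2: "E m (x - 1) = (\<Sum>i\<le>Suc m. v i)"
    unfolding E_def v_def h_def by (simp add: algebra_simps)
  have "(\<Sum>i\<le>Suc m. t i) = (\<Sum>i\<le>Suc m. x * u i + (real m + 2 - x) * v i)"
  proof (rule sum.cong[OF refl])
    fix i
    have "t i = (-1)^i * (- real (Suc (Suc m) choose Suc i) * (x - real (Suc i))) * h (Suc i)"
      unfolding t_def by (simp del: binomial_Suc_Suc add: algebra_simps)
    also have "\<dots> = (-1)^i * (- x * real (Suc m choose Suc i) + (real m + 2 - x) * real (Suc m choose i)) * h (Suc i)"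
      by (simp only: binom_term)
    also have "\<dots> = x * u i + (real m + 2 - x) * v i"
      by (simp add: u_def v_def algebra_simps)
    finally show "t i = x * u i + (real m + 2 - x) * v i" .
  qed
  also have "\<dots> = x * (\<Sum>i\<le>Suc m. u i) + (real m + 2 - x) * (\<Sum>i\<le>Suc m. v i)"
    by (simp only: sum.distrib sum_distrib_left)
  finally show ?thesis using L R1 R2 by (simp add: algebra_simps)
qed

lemma E_neg: "E m (-1/2) = 0"
  by (simp add: E_def tp_def)

lemma A_E: "real (A n j) = 2 ^ n * E n (real j + 1/2)"
proof (induction n arbitrary: j)
  case 0
  show ?case by (cases j) (simp_all add: A_0 E_def tp_def)
next
  case (Suc m)
  have r: "E (Suc m) (real j + 1/2) = (real j + 1/2) * E m (real j + 1/2) + (real m + 3/2 - real j) * E m (real j - 1/2)"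
    using E_rec[of m "real j + 1/2"] by (simp add: algebra_simps)
  show ?case
  proof (cases j)
    case 0
    then show ?thesis using A_rec[of m 0] Suc.IH[of 0] r E_neg[of m] by (simp add: algebra_simps)
  next
    case (Suc i)
    have "E m (real i + 1/2) = E m (real j - 1/2)" by (rule arg_cong[where f="E m"]) (simp add: Suc)
    then have IH2: "real (A m i) = 2 ^ m * E m (real j - 1/2)" using Suc.IH[of i] by simp
    have j0: "j \<noteq> 0" and ji: "j - 1 = i" using Suc by auto
    have "real (A (Suc m) j) = (2*real j+1) * (2^m * E m (real j + 1/2)) + (2*real m+3-2*real j) * (2^m * E m (real j - 1/2))"
      using A_rec[of m j] Suc.IH[of j] IH2 j0 ji by simp
    also have "\<dots> = 2^(Suc m) * E (Suc m) (real j + 1/2)"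
      unfolding r by (simp add: algebra_simps)
    finally show ?thesis .
  qed
qed

lemma Fk_diff:
  assumes "n \<ge> 1"
  shows "Fk False n b - Fk True n (b - 1) = E n b / fact n"
proof -
  have tpeq: "tp False n y = tp True n y" for y
    using assms by (simp add: tp_def)
  have "Fk False n b - Fk True n (b - 1)
      = (\<Sum>i\<le>n. (-1)^i * real (n choose i) * (tp True n (b - real i) - tp True n (b - real (Suc i)))) / fact n"
    by (simp add: Fk_def tpeq diff_divide_distrib sum_subtractf algebra_simps)
  also have "\<dots> = E n b / fact n"
    unfolding E_def by (subst pascal_sum[where g="\<lambda>i. tp True n (b - real i)"]) simp
  finally show ?thesis .
qed



theorem proposition4p7:
  fixes M :: "'a measure" and U :: "nat \<Rightarrow> 'a \<Rightarrow> real" and n j :: nat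
  assumes "prob_space M"
    and "n \<ge> 1"
    and "prob_space.indep_vars M (\<lambda>_. borel) U {1..n}"
    and "\<And>i. i \<in> {1..n} \<Longrightarrow> distr M borel (U i) = uniform_measure lborel {0..1::real}"
    and "j \<le> n"
  shows "prob_space.prob M
           {\<omega> \<in> space M. real j - 1/2 \<le> (\<Sum>i=1..n. U i \<omega>) \<and> (\<Sum>i=1..n. U i \<omega>) \<le> real j + 1/2}
         = real (eulerB n j) / (2 ^ n * fact n)"
proof -
  interpret prob_space M by fact
  have rv[measurable]: "U i \<in> borel_measurable M" if "i \<in> {1..n}" for i
    using assms(3) that by (auto simp: indep_vars_def)
  have rvS[measurable]: "(\<lambda>\<omega>. \<Sum>i=1..n. U i \<omega>) \<in> borel_measurable M"
    by (intro borel_measurable_sum rv) auto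
  define b where "b = real j + 1/2"
  define SB where "SB = {\<omega> \<in> space M. (\<Sum>i=1..n. U i \<omega>) \<le> b}"
  define SA where "SA = {\<omega> \<in> space M. (\<Sum>i=1..n. U i \<omega>) < b - 1}"
  have setq: "{\<omega> \<in> space M. real j - 1/2 \<le> (\<Sum>i=1..n. U i \<omega>) \<and> (\<Sum>i=1..n. U i \<omega>) \<le> real j + 1/2} = SB - SA"
    by (auto simp: SB_def SA_def b_def)
  have SBm: "SB \<in> events" unfolding SB_def by measurable
  have SAm: "SA \<in> events" unfolding SA_def by measurable
  have sub: "SA \<subseteq> SB" by (auto simp: SA_def SB_def)
  have pB: "prob SB = Fk False n b"
    using irwin[OF assms(1,3,4), of n False b] by (simp add: SB_def)
  have pA: "prob SA = Fk True n (b - 1)"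
    using irwin[OF assms(1,3,4), of n True "b - 1"] by (simp add: SA_def)
  have "prob (SB - SA) = prob SB - prob SA"
    by (rule finite_measure_Diff[OF SBm SAm sub])
  also have "\<dots> = E n b / fact n" using pB pA Fk_diff[OF assms(2)] by simp
  also have "E n b = real (eulerB n j) / 2 ^ n"
    using A_E[of n j] by (simp add: eulerB_A b_def field_simps)
  finally show ?thesis unfolding setq by (simp add: field_simps)
qed

end
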